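(* Let $\widetilde{E(2)}$ be as described in the context, let $K$ be a real number with $K\neq 0$ and $|K|<1$, let $b:\mathbb{R}\to\mathbb{R}$ be the solution of $$b'(v)=\sqrt{\lambda_1^2-K\left(\lambda_1^2\cos^2 b(v)+\lambda_2^2\sin^2 b(v)\right)},\qquad b(0)=0,$$ and let $x_3:\mathbb{R}\to\mathbb{R}$ be the solution of $x_3'(v)=\dfrac{\lambda_1\lambda_2K}{\lambda_1+b'(v)}$, $x_3(0)=0$. Then the mapping $X:\mathbb{C}\to\widetilde{E(2)}$, $X(u+iv)=(x_1,x_2,x_3)$ with $$x_1(u+iv)=\frac{1}{\lambda_1^2\lambda_2}\left(\frac{1}{\lambda_1}\cos x_3(v)\sin b(v)+\frac{1}{\lambda_2}\sin x_3(v)\cos b(v)\right)x_3'(v)\sinh(-\lambda_1u),$$ $$x_2(u+iv)=\frac{1}{\lambda_1^2\lambda_2}\left(\frac{1}{\lambda_1}\sin x_3(v)\sin b(v)-\frac{1}{\lambda_2}\cos x_3(v)\cos b(v)\right)x_3'(v)\sinh(-\lambda_1u),$$ $$x_3(u+iv)=x_3(v),$$ is a conformal minimal immersion from $\mathbb{C}$ into $\widetilde{E(2)}$ whose Gauss map (for a suitable choice of unit normal) is $g(u+iv)=e^{-\lambda_1u}e^{ib(v)}$.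
   Context: $\widetilde{E(2)}$ is $\mathbb{R}^3$ with coordinates $(x_1,x_2,x_3)$ and group law $(a_1,b_1,c_1)*(a_2,b_2,c_2)=(a_1+a_2\cos c_1-b_2\sin c_1,\ b_1+a_2\sin c_1+b_2\cos c_1,\ c_1+c_2)$, endowed with the left-invariant Riemannian metric $\lambda_1^2(\cos x_3\,dx_1+\sin x_3\,dx_2)^2+\lambda_2^2(-\sin x_3\,dx_1+\cos x_3\,dx_2)^2+\frac{1}{\lambda_1^2\lambda_2^2}dx_3^2$, where either $\lambda_1>\lambda_2>0$ or $\lambda_1=\lambda_2=1$. The left-invariant orthonormal frame is $E_1=\frac{1}{\lambda_1}(\cos x_3\,\partial_{x_1}+\sin x_3\,\partial_{x_2})$, $E_2=\frac{1}{\lambda_2}(-\sin x_3\,\partial_{x_1}+\cos x_3\,\partial_{x_2})$, $E_3=\lambda_1\lambda_2\,\partial_{x_3}$. For an immersed surface with unit normal $N=N_1E_1+N_2E_2+N_3E_3$, its Gauss map is $g=\frac{N_1+iN_2}{1+N_3}\in\mathbb{C}\cup\{\infty\}$ (stereographic projection from the south pole of the left-invariant Gauss map). Points of $\mathbb{C}$ are written $z=u+iv$. *)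

theory Defs
  imports "HOL-Analysis.Analysis"
begin

section \<open>The Riemannian manifold E(2)~ = R^3 with the left-invariant metric\<close>

text \<open>Points and coordinate tangent vectors of R^3 are elements of real^3;
  component k is the coefficient of the coordinate field d/dx_k.
  Parameters l1, l2 are lambda_1, lambda_2.\<close>

definition theta1 :: "real \<Rightarrow> real^3 \<Rightarrow> real" where
  "theta1 x3 v = cos x3 * v$1 + sin x3 * v$2"

definition theta2 :: "real \<Rightarrow> real^3 \<Rightarrow> real" where
  "theta2 x3 v = - sin x3 * v$1 + cos x3 * v$2"

definition ginner :: "real \<Rightarrow> real \<Rightarrow> real^3 \<Rightarrow> real^3 \<Rightarrow> real^3 \<Rightarrow> real" where
  "ginner l1 l2 p v w =
     l1^2 * theta1 (p$3) v * theta1 (p$3) w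
   + l2^2 * theta2 (p$3) v * theta2 (p$3) w
   + (1 / (l1^2 * l2^2)) * (v$3) * (w$3)"

definition gmat :: "real \<Rightarrow> real \<Rightarrow> real^3 \<Rightarrow> real^3^3" where
  "gmat l1 l2 p = (\<chi> i j. ginner l1 l2 p (axis i 1) (axis j 1))"

definition dgmat :: "real \<Rightarrow> real \<Rightarrow> 3 \<Rightarrow> 3 \<Rightarrow> 3 \<Rightarrow> real^3 \<Rightarrow> real" where
  "dgmat l1 l2 a b c p = deriv (\<lambda>t. gmat l1 l2 (p + t *\<^sub>R axis c 1) $ a $ b) 0"

definition christoffel :: "real \<Rightarrow> real \<Rightarrow> 3 \<Rightarrow> 3 \<Rightarrow> 3 \<Rightarrow> real^3 \<Rightarrow> real" where
  "christoffel l1 l2 k i j p =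
     (1/2) * (\<Sum>l\<in>UNIV. matrix_inv (gmat l1 l2 p) $ k $ l *
        (dgmat l1 l2 j l i p + dgmat l1 l2 i l j p - dgmat l1 l2 i j l p))"

definition frameE :: "real \<Rightarrow> real \<Rightarrow> 3 \<Rightarrow> real^3 \<Rightarrow> real^3" where
  "frameE l1 l2 i p =
     (if i = 1 then (1 / l1) *\<^sub>R vector [cos (p$3), sin (p$3), 0]
      else if i = 2 then (1 / l2) *\<^sub>R vector [- sin (p$3), cos (p$3), 0]
      else vector [0, 0, l1 * l2])"

text \<open>Partial derivative of f in direction w (w = 1: d/du, w = i: d/dv).\<close>
definition pd :: "(complex \<Rightarrow> 'a::real_normed_vector) \<Rightarrow> complex \<Rightarrow> complex \<Rightarrow> 'a" where
  "pd f w z = vector_derivative (\<lambda>t. f (z + of_real t * w)) (at 0)"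

fun Ck :: "nat \<Rightarrow> (complex \<Rightarrow> 'a::real_normed_vector) \<Rightarrow> bool" where
  "Ck 0 f = continuous_on UNIV f"
| "Ck (Suc n) f = ((\<forall>z. f differentiable (at z)) \<and> Ck n (pd f 1) \<and> Ck n (pd f \<i>))"

definition smooth_map :: "(complex \<Rightarrow> 'a::real_normed_vector) \<Rightarrow> bool" where
  "smooth_map f \<longleftrightarrow> (\<forall>n. Ck n f)"

definition immersion :: "(complex \<Rightarrow> real^3) \<Rightarrow> bool" where
  "immersion X \<longleftrightarrow> smooth_map X \<and>
     (\<forall>z. \<exists>D. (X has_derivative D) (at z) \<and> inj D)"

definition fff :: "real \<Rightarrow> real \<Rightarrow> (complex \<Rightarrow> real^3) \<Rightarrow> complex \<Rightarrow> complex \<Rightarrow> complex \<Rightarrow> real" where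
  "fff l1 l2 X a b z = ginner l1 l2 (X z) (pd X a z) (pd X b z)"

definition conformal :: "real \<Rightarrow> real \<Rightarrow> (complex \<Rightarrow> real^3) \<Rightarrow> bool" where
  "conformal l1 l2 X \<longleftrightarrow>
     (\<forall>z. fff l1 l2 X 1 1 z = fff l1 l2 X \<i> \<i> z \<and> fff l1 l2 X 1 \<i> z = 0)"

definition fffinv :: "real \<Rightarrow> real \<Rightarrow> (complex \<Rightarrow> real^3) \<Rightarrow> complex \<Rightarrow> complex \<Rightarrow> complex \<Rightarrow> real" where
  "fffinv l1 l2 X a b z =
     (let E = fff l1 l2 X 1 1 z; F = fff l1 l2 X 1 \<i> z; G = fff l1 l2 X \<i> \<i> z;
          d = E * G - F^2
      in if a = 1 \<and> b = 1 then G / d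
         else if a = \<i> \<and> b = \<i> then E / d
         else - F / d)"

definition covd :: "real \<Rightarrow> real \<Rightarrow> (complex \<Rightarrow> real^3) \<Rightarrow> complex \<Rightarrow> complex \<Rightarrow> complex \<Rightarrow> real^3" where
  "covd l1 l2 X a b z =
     (\<chi> k. pd (pd X b) a z $ k +
        (\<Sum>i\<in>UNIV. \<Sum>j\<in>UNIV. christoffel l1 l2 k i j (X z) * pd X a z $ i * pd X b z $ j))"

definition normal_part :: "real \<Rightarrow> real \<Rightarrow> (complex \<Rightarrow> real^3) \<Rightarrow> complex \<Rightarrow> real^3 \<Rightarrow> real^3" where
  "normal_part l1 l2 X z v =
     v - (\<Sum>a\<in>{1, \<i>}. \<Sum>b\<in>{1, \<i>}.
            (fffinv l1 l2 X a b z * ginner l1 l2 (X z) v (pd X a z)) *\<^sub>R pd X b z)"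

definition mean_curv_vec :: "real \<Rightarrow> real \<Rightarrow> (complex \<Rightarrow> real^3) \<Rightarrow> complex \<Rightarrow> real^3" where
  "mean_curv_vec l1 l2 X z =
     (1/2) *\<^sub>R (\<Sum>a\<in>{1, \<i>}. \<Sum>b\<in>{1, \<i>}.
        fffinv l1 l2 X a b z *\<^sub>R normal_part l1 l2 X z (covd l1 l2 X a b z))"

definition minimal :: "real \<Rightarrow> real \<Rightarrow> (complex \<Rightarrow> real^3) \<Rightarrow> bool" where
  "minimal l1 l2 X \<longleftrightarrow> (\<forall>z. mean_curv_vec l1 l2 X z = 0)"

definition conformal_minimal_immersion :: "real \<Rightarrow> real \<Rightarrow> (complex \<Rightarrow> real^3) \<Rightarrow> bool" where
  "conformal_minimal_immersion l1 l2 X \<longleftrightarrow>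
     immersion X \<and> conformal l1 l2 X \<and> minimal l1 l2 X"

definition unit_normal :: "real \<Rightarrow> real \<Rightarrow> (complex \<Rightarrow> real^3) \<Rightarrow> (complex \<Rightarrow> real^3) \<Rightarrow> bool" where
  "unit_normal l1 l2 X N \<longleftrightarrow> continuous_on UNIV N \<and>
     (\<forall>z. ginner l1 l2 (X z) (N z) (N z) = 1 \<and>
          ginner l1 l2 (X z) (N z) (pd X 1 z) = 0 \<and>
          ginner l1 l2 (X z) (N z) (pd X \<i> z) = 0)"

definition normal_comp :: "real \<Rightarrow> real \<Rightarrow> (complex \<Rightarrow> real^3) \<Rightarrow> (complex \<Rightarrow> real^3) \<Rightarrow> 3 \<Rightarrow> complex \<Rightarrow> real" where
  "normal_comp l1 l2 X N i z = ginner l1 l2 (X z) (N z) (frameE l1 l2 i (X z))"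

definition gauss_map :: "real \<Rightarrow> real \<Rightarrow> (complex \<Rightarrow> real^3) \<Rightarrow> (complex \<Rightarrow> real^3) \<Rightarrow> complex \<Rightarrow> complex" where
  "gauss_map l1 l2 X N z =
     Complex (normal_comp l1 l2 X N 1 z) (normal_comp l1 l2 X N 2 z)
       / of_real (1 + normal_comp l1 l2 X N 3 z)"

definition bprime :: "real \<Rightarrow> real \<Rightarrow> real \<Rightarrow> (real \<Rightarrow> real) \<Rightarrow> real \<Rightarrow> real" where
  "bprime l1 l2 K b v = sqrt (l1^2 - K * (l1^2 * (cos (b v))^2 + l2^2 * (sin (b v))^2))"

definition x3prime :: "real \<Rightarrow> real \<Rightarrow> real \<Rightarrow> (real \<Rightarrow> real) \<Rightarrow> real \<Rightarrow> real" where
  "x3prime l1 l2 K b v = l1 * l2 * K / (l1 + bprime l1 l2 K b v)"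

definition surfX :: "real \<Rightarrow> real \<Rightarrow> real \<Rightarrow> (real \<Rightarrow> real) \<Rightarrow> (real \<Rightarrow> real) \<Rightarrow> complex \<Rightarrow> real^3" where
  "surfX l1 l2 K b x3 z = (let u = Re z; v = Im z in
     vector [
       1 / (l1^2 * l2) * ((1/l1) * cos (x3 v) * sin (b v) + (1/l2) * sin (x3 v) * cos (b v))
         * x3prime l1 l2 K b v * sinh (- l1 * u),
       1 / (l1^2 * l2) * ((1/l1) * sin (x3 v) * sin (b v) - (1/l2) * cos (x3 v) * cos (b v))
         * x3prime l1 l2 K b v * sinh (- l1 * u),
       x3 v])"

end

theory Submission
  imports Defs
begin


definition rot :: "real \<Rightarrow> real \<Rightarrow> real \<Rightarrow> real \<Rightarrow> real^3" where
  "rot t a b c = vector [cos t * a - sin t * b, sin t * a + cos t * b, c]"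

lemma rot_nth [simp]:
  "rot t a b c $ 1 = cos t * a - sin t * b"
  "rot t a b c $ 2 = sin t * a + cos t * b"
  "rot t a b c $ 3 = c"
  by (simp_all add: rot_def)

lemma theta1_rot [simp]: "theta1 t (rot t a b c) = a"
proof -
  show ?thesis unfolding theta1_def rot_nth using sin_cos_squared_add[of t] by algebra
qed

lemma theta2_rot [simp]: "theta2 t (rot t a b c) = b"
proof -
  show ?thesis unfolding theta2_def rot_nth using sin_cos_squared_add[of t] by algebra
qed

lemma vec_as_rot: "v = rot t (theta1 t v) (theta2 t v) (v $ 3)"
proof -
  have "sin t ^ 2 + cos t ^ 2 = 1" by simp
  then have "rot t (theta1 t v) (theta2 t v) (v $ 3) $ 1 = v$1"
    "rot t (theta1 t v) (theta2 t v) (v $ 3) $ 2 = v$2"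
    by (simp_all add: theta1_def theta2_def; algebra)+
  then show ?thesis by (simp add: vec_eq_iff forall_3)
qed

lemma rot_eq_iff: "rot t a b c = rot t a' b' c' \<longleftrightarrow> a = a' \<and> b = b' \<and> c = c'"
  by (metis theta1_rot theta2_rot rot_nth(3))

lemma rot_add: "rot t a b c + rot t a' b' c' = rot t (a + a') (b + b') (c + c')"
  by (simp add: vec_eq_iff forall_3 algebra_simps)

lemma rot_scale: "r *\<^sub>R rot t a b c = rot t (r * a) (r * b) (r * c)"
  by (simp add: vec_eq_iff forall_3 algebra_simps)

lemma rot_zero: "(0::real^3) = rot t 0 0 0"
  by (simp add: vec_eq_iff forall_3)

lemma rot_minus: "- rot t a b c = rot t (- a) (- b) (- c)"
  by (simp add: vec_eq_iff forall_3 algebra_simps)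

lemma ginner_rot:
  "ginner l1 l2 p (rot (p$3) a b c) (rot (p$3) a' b' c') =
     l1^2 * a * a' + l2^2 * b * b' + c * c' / (l1^2 * l2^2)"
  by (simp add: ginner_def)

lemma frameE_rot:
  "frameE l1 l2 1 p = rot (p$3) (1/l1) 0 0"
  "frameE l1 l2 2 p = rot (p$3) 0 (1/l2) 0"
  "frameE l1 l2 3 p = rot (p$3) 0 0 (l1 * l2)"
  by (simp_all add: frameE_def vec_eq_iff forall_3)

lemma rot_as_sum:
  "rot t a b c = (cos t * a - sin t * b) *\<^sub>R axis 1 1 + (sin t * a + cos t * b) *\<^sub>R axis 2 1
     + c *\<^sub>R axis 3 1"
  by (simp add: vec_eq_iff forall_3 axis_def)

lemma rot_has_derivative:
  assumes "(th has_derivative th') (at x)" "(a has_derivative a') (at x)"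
    "(bb has_derivative bb') (at x)" "(c has_derivative c') (at x)"
  shows "((\<lambda>y. rot (th y) (a y) (bb y) (c y)) has_derivative
     (\<lambda>h. rot (th x) (a' h - th' h * bb x) (bb' h + th' h * a x) (c' h))) (at x)"
unfolding rot_as_sum
  apply (rule has_derivative_eq_rhs)
   apply (rule derivative_intros assms)+
  apply (rule ext)
  apply (simp add: vec_eq_iff forall_3 axis_def algebra_simps)
  done

lemma pd_eq:
  fixes f :: "complex \<Rightarrow> 'a::real_normed_vector"
  assumes "(f has_derivative D) (at z)"
  shows "pd f w z = D w"
proof -
  have lin: "linear D" using assms has_derivative_linear by blast
  have g: "((\<lambda>t. z + of_real t * w) has_derivative (\<lambda>h. of_real h * w)) (at 0)"
    by (intro derivative_eq_intros) auto
  have f0: "(f has_derivative D) (at (z + of_real 0 * w))" using assms by simp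
  have "((\<lambda>t. f (z + of_real t * w)) has_derivative (\<lambda>h. D (of_real h * w))) (at 0)"
    using has_derivative_compose[OF g f0] by (simp add: o_def)
  moreover have "(\<lambda>h. D (of_real h * w)) = (\<lambda>h. h *\<^sub>R D w)"
  proof
    fix h :: real
    have "D (of_real h * w) = D (h *\<^sub>R w)" by (simp add: scaleR_conv_of_real)
    also have "\<dots> = h *\<^sub>R D w" using lin by (simp add: linear_scale)
    finally show "D (of_real h * w) = h *\<^sub>R D w" .
  qed
  ultimately have "((\<lambda>t. f (z + of_real t * w)) has_vector_derivative D w) (at 0)"
    by (simp add: has_vector_derivative_def)
  then show ?thesis unfolding pd_def by (rule vector_derivative_at)
qed

definition hasp :: "(complex \<Rightarrow> real) \<Rightarrow> (complex \<Rightarrow> real) \<Rightarrow> (complex \<Rightarrow> real) \<Rightarrow> bool" where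
  "hasp f fu fv \<longleftrightarrow> (\<forall>z. (f has_derivative (\<lambda>w. Re w * fu z + Im w * fv z)) (at z))"

lemma hasp_D: "hasp f fu fv \<Longrightarrow> (f has_derivative (\<lambda>w. Re w * fu z + Im w * fv z)) (at z)"
  by (simp add: hasp_def)

lemma hasp_pd1: "hasp f fu fv \<Longrightarrow> pd f 1 = fu"
proof
  fix z assume "hasp f fu fv"
  from pd_eq[OF hasp_D[OF this, of z], of 1] show "pd f 1 z = fu z" by simp
qed

lemma hasp_pdi: "hasp f fu fv \<Longrightarrow> pd f \<i> = fv"
proof
  fix z assume "hasp f fu fv"
  from pd_eq[OF hasp_D[OF this, of z], of \<i>] show "pd f \<i> z = fv z" by simp
qed

lemma hasp_const: "hasp (\<lambda>z. c) (\<lambda>z. 0) (\<lambda>z. 0)"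
  unfolding hasp_def
  apply (intro allI)
  apply (rule has_derivative_eq_rhs[OF has_derivative_const])
  apply simp
  done

lemma hasp_add: "hasp f fu fv \<Longrightarrow> hasp g gu gv \<Longrightarrow>
   hasp (\<lambda>z. f z + g z) (\<lambda>z. fu z + gu z) (\<lambda>z. fv z + gv z)"
  unfolding hasp_def
  apply (intro allI)
  apply (rule has_derivative_eq_rhs)
   apply (rule has_derivative_add)
    apply (erule spec)
   apply (erule spec)
  apply (simp add: fun_eq_iff algebra_simps)
  done

lemma hasp_mult: "hasp f fu fv \<Longrightarrow> hasp g gu gv \<Longrightarrow>
   hasp (\<lambda>z. f z * g z) (\<lambda>z. f z * gu z + fu z * g z) (\<lambda>z. f z * gv z + fv z * g z)"
  unfolding hasp_def
  apply (intro allI)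
  apply (rule has_derivative_eq_rhs)
   apply (rule has_derivative_mult)
    apply (erule spec)
   apply (erule spec)
  apply (simp add: fun_eq_iff algebra_simps)
  done

lemma hasp_comp:
  assumes d: "\<And>x. DERIV h x :> h' x" and f: "hasp f fu fv"
  shows "hasp (\<lambda>z. h (f z)) (\<lambda>z. h' (f z) * fu z) (\<lambda>z. h' (f z) * fv z)"
  unfolding hasp_def
proof
  fix z
  show "((\<lambda>z. h (f z)) has_derivative (\<lambda>w. Re w * (h' (f z) * fu z) + Im w * (h' (f z) * fv z))) (at z)"
    using DERIV_compose_FDERIV[OF d hasp_D[OF f, of z]]
    by (rule has_derivative_eq_rhs) (simp add: fun_eq_iff algebra_simps)
qed

lemma hasp_Re: "hasp (\<lambda>z. Re z) (\<lambda>z. 1) (\<lambda>z. 0)"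
  unfolding hasp_def
  apply (intro allI)
  apply (rule has_derivative_eq_rhs[OF bounded_linear.has_derivative[OF bounded_linear_Re has_derivative_ident]])
  apply simp
  done

lemma hasp_Im: "hasp (\<lambda>z. Im z) (\<lambda>z. 0) (\<lambda>z. 1)"
  unfolding hasp_def
  apply (intro allI)
  apply (rule has_derivative_eq_rhs[OF bounded_linear.has_derivative[OF bounded_linear_Im has_derivative_ident]])
  apply simp
  done

lemma hasp_rot:
  assumes "hasp th thu thv" "hasp a au av" "hasp bb bu bv" "hasp c cu cv"
  shows "((\<lambda>z. rot (th z) (a z) (bb z) (c z)) has_derivative
    (\<lambda>w. Re w *\<^sub>R rot (th z) (au z - thu z * bb z) (bu z + thu z * a z) (cu z)
       + Im w *\<^sub>R rot (th z) (av z - thv z * bb z) (bv z + thv z * a z) (cv z))) (at z)"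
  apply (rule has_derivative_eq_rhs)
   apply (rule rot_has_derivative[OF hasp_D[OF assms(1)] hasp_D[OF assms(2)] hasp_D[OF assms(3)] hasp_D[OF assms(4)]])
  apply (rule ext)
  apply (simp add: vec_eq_iff forall_3 algebra_simps)
  done


lemma axis3_simps [simp]:
  "theta1 t (axis 1 1) = cos t" "theta1 t (axis 2 1) = sin t" "theta1 t (axis 3 1) = 0"
  "theta2 t (axis 1 1) = - sin t" "theta2 t (axis 2 1) = cos t" "theta2 t (axis 3 1) = 0"
  "(axis 1 1 :: real^3) $ 3 = 0" "(axis 2 1 :: real^3) $ 3 = 0" "(axis 3 1 :: real^3) $ 3 = 1"
  by (simp_all add: theta1_def theta2_def axis_def)

lemma axis_nth3 [simp]:
  "(axis 1 1 :: real^3) $ 1 = 1" "(axis 1 1 :: real^3) $ 2 = 0"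
  "(axis 2 1 :: real^3) $ 1 = 0" "(axis 2 1 :: real^3) $ 2 = 1"
  "(axis 3 1 :: real^3) $ 1 = 0" "(axis 3 1 :: real^3) $ 2 = 0"
  by (simp_all add: axis_def)

definition Ginv :: "real \<Rightarrow> real \<Rightarrow> real \<Rightarrow> real^3^3" where
  "Ginv l1 l2 t = (\<chi> i j. (1/l1^2) * theta1 t (axis i 1) * theta1 t (axis j 1)
     + (1/l2^2) * theta2 t (axis i 1) * theta2 t (axis j 1)
     + (l1^2 * l2^2) * (axis i 1 :: real^3) $ 3 * (axis j 1 :: real^3) $ 3)"

lemma gmat_entry: "gmat l1 l2 p $ i $ j = ginner l1 l2 p (axis i 1) (axis j 1)"
  by (simp add: gmat_def)

lemma gmat_Ginv:
  assumes "l1 \<noteq> 0" "l2 \<noteq> 0"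
  shows "gmat l1 l2 p ** Ginv l1 l2 (p$3) = mat 1" "Ginv l1 l2 (p$3) ** gmat l1 l2 p = mat 1"
proof -
  have sc: "sin (p$3) ^ 2 + cos (p$3) ^ 2 = 1" by simp
  show "gmat l1 l2 p ** Ginv l1 l2 (p$3) = mat 1"
    unfolding matrix_matrix_mult_def mat_def vec_eq_iff forall_3
    using assms sc
    by (simp add: sum_3 gmat_entry ginner_def Ginv_def field_simps; algebra)
  show "Ginv l1 l2 (p$3) ** gmat l1 l2 p = mat 1"
    unfolding matrix_matrix_mult_def mat_def vec_eq_iff forall_3
    using assms sc
    by (simp add: sum_3 gmat_entry ginner_def Ginv_def field_simps; algebra)
qed

lemma matrix_inv_eq:
  fixes A :: "real^'n^'n"
  assumes "A ** B = mat 1" "B ** A = mat 1"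
  shows "matrix_inv A = B"
  unfolding matrix_inv_def
proof (rule some_equality)
  show "A ** B = mat 1 \<and> B ** A = mat 1" using assms by simp
next
  fix C assume "A ** C = mat 1 \<and> C ** A = mat 1"
  then have "C = (B ** A) ** C" by (simp add: assms)
  also have "\<dots> = B" by (simp add: matrix_mul_assoc[symmetric] \<open>A ** C = mat 1 \<and> C ** A = mat 1\<close> matrix_mul_rid)
  finally show "C = B" .
qed

definition dg :: "real \<Rightarrow> real \<Rightarrow> real \<Rightarrow> real^3 \<Rightarrow> real^3 \<Rightarrow> real" where
  "dg l1 l2 t v w = (l1^2 - l2^2) * (theta1 t v * theta2 t w + theta2 t v * theta1 t w)"

definition Gt :: "real \<Rightarrow> real \<Rightarrow> real \<Rightarrow> real^3 \<Rightarrow> real^3 \<Rightarrow> real" where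
  "Gt l1 l2 t v w = l1^2 * theta1 t v * theta1 t w + l2^2 * theta2 t v * theta2 t w
     + (1 / (l1^2 * l2^2)) * (v$3) * (w$3)"

lemma ginner_Gt: "ginner l1 l2 q v w = Gt l1 l2 (q$3) v w"
  by (simp add: ginner_def Gt_def)

lemma Gt_deriv: "DERIV (\<lambda>t. Gt l1 l2 t v w) t :> dg l1 l2 t v w"
  unfolding Gt_def dg_def theta1_def theta2_def
  apply (rule DERIV_cong)
   apply (rule derivative_intros)+
  apply (simp add: algebra_simps)
  done

lemma dgmat_eq: "dgmat l1 l2 a b c p = dg l1 l2 (p$3) (axis a 1) (axis b 1) * (axis c 1 :: real^3) $ 3"
proof -
  have e: "DERIV (\<lambda>h. p$3 + h * (axis c 1 :: real^3) $ 3) 0 :> (axis c 1 :: real^3) $ 3"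
    by (auto intro!: derivative_eq_intros)
  have "DERIV (\<lambda>h. Gt l1 l2 (p$3 + h * (axis c 1 :: real^3) $ 3) (axis a 1) (axis b 1)) 0 :>
          dg l1 l2 (p$3 + 0 * (axis c 1 :: real^3) $ 3) (axis a 1) (axis b 1) * ((axis c 1 :: real^3) $ 3)"
    by (rule DERIV_chain2[OF Gt_deriv e])
  then have "DERIV (\<lambda>h. gmat l1 l2 (p + h *\<^sub>R axis c 1) $ a $ b) 0 :>
          dg l1 l2 (p$3) (axis a 1) (axis b 1) * (axis c 1 :: real^3) $ 3"
    by (simp add: gmat_entry ginner_Gt)
  then show ?thesis unfolding dgmat_def by (rule DERIV_imp_deriv)
qed

definition Gam :: "real \<Rightarrow> real \<Rightarrow> real^3 \<Rightarrow> real^3 \<Rightarrow> real^3 \<Rightarrow> real^3" where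
  "Gam l1 l2 p V W = (\<chi> k. \<Sum>i\<in>UNIV. \<Sum>j\<in>UNIV. christoffel l1 l2 k i j p * V $ i * W $ j)"

lemma sum_swap3:
  fixes F :: "'i \<Rightarrow> 'j \<Rightarrow> 'l \<Rightarrow> real"
  shows "(\<Sum>i\<in>A. \<Sum>j\<in>B. (c * (\<Sum>l\<in>C. F i j l)) * V i * W j)
       = c * (\<Sum>l\<in>C. \<Sum>i\<in>A. \<Sum>j\<in>B. F i j l * V i * W j)"
proof -
  have "(\<Sum>i\<in>A. \<Sum>j\<in>B. (c * (\<Sum>l\<in>C. F i j l)) * V i * W j)
      = (\<Sum>i\<in>A. \<Sum>j\<in>B. \<Sum>l\<in>C. c * (F i j l * V i * W j))"
    by (simp add: sum_distrib_left sum_distrib_right mult.assoc)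
  also have "\<dots> = (\<Sum>i\<in>A. \<Sum>l\<in>C. \<Sum>j\<in>B. c * (F i j l * V i * W j))"
    by (rule sum.cong[OF refl], rule sum.swap)
  also have "\<dots> = (\<Sum>l\<in>C. \<Sum>i\<in>A. \<Sum>j\<in>B. c * (F i j l * V i * W j))"
    by (rule sum.swap)
  also have "\<dots> = c * (\<Sum>l\<in>C. \<Sum>i\<in>A. \<Sum>j\<in>B. F i j l * V i * W j)"
    by (simp add: sum_distrib_left)
  finally show ?thesis .
qed

definition omg :: "real \<Rightarrow> real \<Rightarrow> real \<Rightarrow> real^3 \<Rightarrow> real^3 \<Rightarrow> real^3" where
  "omg l1 l2 t V W = (\<chi> l. V$3 * dg l1 l2 t W (axis l 1) + W$3 * dg l1 l2 t V (axis l 1)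
       - dg l1 l2 t V W * (axis l 1 :: real^3) $ 3)"

lemma omg_inner:
  "(\<Sum>i\<in>UNIV. \<Sum>j\<in>UNIV. (dg l1 l2 t (axis j 1) (axis l 1) * (axis i 1 :: real^3) $ 3
        + dg l1 l2 t (axis i 1) (axis l 1) * (axis j 1 :: real^3) $ 3
        - dg l1 l2 t (axis i 1) (axis j 1) * (axis l 1 :: real^3) $ 3) * V $ i * W $ j)
   = omg l1 l2 t V W $ l"
  by (simp add: omg_def sum_3 dg_def theta1_def theta2_def algebra_simps)

lemma Gam_omg:
  assumes "l1 \<noteq> 0" "l2 \<noteq> 0"
  shows "Gam l1 l2 p V W = (1/2) *\<^sub>R (Ginv l1 l2 (p$3) *v omg l1 l2 (p$3) V W)"
proof -
  have mi: "matrix_inv (gmat l1 l2 p) = Ginv l1 l2 (p$3)"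
    using gmat_Ginv[OF assms] by (rule matrix_inv_eq)
  show ?thesis
    unfolding vec_eq_iff
  proof
    fix k :: 3
    have "Gam l1 l2 p V W $ k = (1/2) * (\<Sum>l\<in>UNIV. \<Sum>i\<in>UNIV. \<Sum>j\<in>UNIV.
         (Ginv l1 l2 (p$3) $ k $ l * (dg l1 l2 (p$3) (axis j 1) (axis l 1) * (axis i 1 :: real^3) $ 3
        + dg l1 l2 (p$3) (axis i 1) (axis l 1) * (axis j 1 :: real^3) $ 3
        - dg l1 l2 (p$3) (axis i 1) (axis j 1) * (axis l 1 :: real^3) $ 3)) * V $ i * W $ j)"
      unfolding Gam_def christoffel_def mi dgmat_eq vec_lambda_beta
      by (rule sum_swap3)
    also have "\<dots> = (1/2) * (\<Sum>l\<in>UNIV. Ginv l1 l2 (p$3) $ k $ l * omg l1 l2 (p$3) V W $ l)"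
      by (simp add: omg_inner[symmetric] sum_distrib_left mult.assoc)
    finally show "Gam l1 l2 p V W $ k = ((1/2) *\<^sub>R (Ginv l1 l2 (p$3) *v omg l1 l2 (p$3) V W)) $ k"
      by (simp add: matrix_vector_mult_def)
  qed
qed

lemma Ginv_frame:
  assumes "l1 \<noteq> 0" "l2 \<noteq> 0"
  shows "theta1 t (Ginv l1 l2 t *v x) = theta1 t x / l1^2"
    "theta2 t (Ginv l1 l2 t *v x) = theta2 t x / l2^2"
    "(Ginv l1 l2 t *v x) $ 3 = l1^2 * l2^2 * x $ 3"
proof -
  have sc: "sin t ^ 2 + cos t ^ 2 = 1" by simp
  show "theta1 t (Ginv l1 l2 t *v x) = theta1 t x / l1^2"
    by (simp add: matrix_vector_mult_def sum_3 Ginv_def theta1_def theta2_def field_simps assms) (use sc in algebra)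
  show "theta2 t (Ginv l1 l2 t *v x) = theta2 t x / l2^2"
    by (simp add: matrix_vector_mult_def sum_3 Ginv_def theta1_def theta2_def field_simps assms) (use sc in algebra)
  show "(Ginv l1 l2 t *v x) $ 3 = l1^2 * l2^2 * x $ 3"
    by (simp add: matrix_vector_mult_def sum_3 Ginv_def theta1_def theta2_def)
qed

lemma omg_frame:
  "theta1 t (omg l1 l2 t V W) = (l1^2 - l2^2) * (V$3 * theta2 t W + W$3 * theta2 t V)"
  "theta2 t (omg l1 l2 t V W) = (l1^2 - l2^2) * (V$3 * theta1 t W + W$3 * theta1 t V)"
  "omg l1 l2 t V W $ 3 = - (l1^2 - l2^2) * (theta1 t V * theta2 t W + theta2 t V * theta1 t W)"
proof -
  have sc: "sin t ^ 2 + cos t ^ 2 = 1" by simp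
  show "theta1 t (omg l1 l2 t V W) = (l1^2 - l2^2) * (V$3 * theta2 t W + W$3 * theta2 t V)"
    unfolding omg_def theta1_def theta2_def dg_def using sc
    by (simp; algebra)
  show "theta2 t (omg l1 l2 t V W) = (l1^2 - l2^2) * (V$3 * theta1 t W + W$3 * theta1 t V)"
    unfolding omg_def theta1_def theta2_def dg_def using sc
    by (simp; algebra)
  show "omg l1 l2 t V W $ 3 = - (l1^2 - l2^2) * (theta1 t V * theta2 t W + theta2 t V * theta1 t W)"
    unfolding omg_def theta1_def theta2_def dg_def
    by (simp add: algebra_simps)
qed

lemma Gam_frame:
  assumes "l1 \<noteq> 0" "l2 \<noteq> 0"
  shows "theta1 (p$3) (Gam l1 l2 p V W) =
           (l1^2 - l2^2) / (2 * l1^2) * (theta2 (p$3) V * W$3 + theta2 (p$3) W * V$3)"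
    "theta2 (p$3) (Gam l1 l2 p V W) =
           (l1^2 - l2^2) / (2 * l2^2) * (theta1 (p$3) V * W$3 + theta1 (p$3) W * V$3)"
    "Gam l1 l2 p V W $ 3 =
           - (l1^2 * l2^2 * (l1^2 - l2^2) / 2) * (theta1 (p$3) V * theta2 (p$3) W + theta2 (p$3) V * theta1 (p$3) W)"
proof -
  have l1: "theta1 t (r *\<^sub>R x) = r * theta1 t x" "theta2 t (r *\<^sub>R x) = r * theta2 t x" for t r and x :: "real^3"
    by (simp_all add: theta1_def theta2_def algebra_simps)
  show "theta1 (p$3) (Gam l1 l2 p V W) =
           (l1^2 - l2^2) / (2 * l1^2) * (theta2 (p$3) V * W$3 + theta2 (p$3) W * V$3)"
    by (simp add: Gam_omg[OF assms] l1 Ginv_frame[OF assms] omg_frame algebra_simps) (simp add: field_simps assms)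
  show "theta2 (p$3) (Gam l1 l2 p V W) =
           (l1^2 - l2^2) / (2 * l2^2) * (theta1 (p$3) V * W$3 + theta1 (p$3) W * V$3)"
    by (simp add: Gam_omg[OF assms] l1 Ginv_frame[OF assms] omg_frame algebra_simps) (simp add: field_simps assms)
  show "Gam l1 l2 p V W $ 3 =
           - (l1^2 * l2^2 * (l1^2 - l2^2) / 2) * (theta1 (p$3) V * theta2 (p$3) W + theta2 (p$3) V * theta1 (p$3) W)"
    by (simp add: Gam_omg[OF assms] Ginv_frame[OF assms] omg_frame algebra_simps) (simp add: field_simps assms)
qed


inductive_set Rgen :: "(complex \<Rightarrow> real) set \<Rightarrow> (complex \<Rightarrow> real) set" for G where
  gen: "f \<in> G \<Longrightarrow> f \<in> Rgen G"
| const: "(\<lambda>z. c) \<in> Rgen G"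
| add: "f \<in> Rgen G \<Longrightarrow> g \<in> Rgen G \<Longrightarrow> (\<lambda>z. f z + g z) \<in> Rgen G"
| mult: "f \<in> Rgen G \<Longrightarrow> g \<in> Rgen G \<Longrightarrow> (\<lambda>z. f z * g z) \<in> Rgen G"

definition closedG :: "(complex \<Rightarrow> real) set \<Rightarrow> bool" where
  "closedG G \<longleftrightarrow> (\<forall>g\<in>G. \<exists>gu gv. gu \<in> Rgen G \<and> gv \<in> Rgen G \<and> hasp g gu gv)"

lemma Rgen_hasp:
  assumes "closedG G" "f \<in> Rgen G"
  shows "\<exists>fu fv. fu \<in> Rgen G \<and> fv \<in> Rgen G \<and> hasp f fu fv"
  using assms(2)
proof induction
  case (gen f) then show ?case using assms(1) by (auto simp: closedG_def)
next
  case (const c)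
  have "hasp (\<lambda>z. c) (\<lambda>z. 0) (\<lambda>z. 0)" by (rule hasp_const)
  moreover have "(\<lambda>z. 0) \<in> Rgen G" by (rule Rgen.const)
  ultimately show ?case by blast
next
  case (add f g)
  then obtain fu fv gu gv where a: "fu \<in> Rgen G" "fv \<in> Rgen G" "hasp f fu fv"
    and b: "gu \<in> Rgen G" "gv \<in> Rgen G" "hasp g gu gv" by blast
  have "hasp (\<lambda>z. f z + g z) (\<lambda>z. fu z + gu z) (\<lambda>z. fv z + gv z)"
    using a(3) b(3) by (rule hasp_add)
  moreover have "(\<lambda>z. fu z + gu z) \<in> Rgen G" using a(1) b(1) by (rule Rgen.add)
  moreover have "(\<lambda>z. fv z + gv z) \<in> Rgen G" using a(2) b(2) by (rule Rgen.add)
  ultimately show ?case by blast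
next
  case (mult f g)
  then obtain fu fv gu gv where a: "fu \<in> Rgen G" "fv \<in> Rgen G" "hasp f fu fv"
    and b: "gu \<in> Rgen G" "gv \<in> Rgen G" "hasp g gu gv" by blast
  have "hasp (\<lambda>z. f z * g z) (\<lambda>z. f z * gu z + fu z * g z) (\<lambda>z. f z * gv z + fv z * g z)"
    using a(3) b(3) by (rule hasp_mult)
  moreover have "(\<lambda>z. f z * gu z + fu z * g z) \<in> Rgen G"
    by (intro Rgen.add Rgen.mult mult a b)
  moreover have "(\<lambda>z. f z * gv z + fv z * g z) \<in> Rgen G"
    by (intro Rgen.add Rgen.mult mult a b)
  ultimately show ?case by blast
qed

lemma hasp_differentiable: "hasp f fu fv \<Longrightarrow> f differentiable (at z)"
  using hasp_D differentiable_def by blast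

lemma hasp_continuous_on: "hasp f fu fv \<Longrightarrow> continuous_on UNIV f"
  by (meson continuous_at_imp_continuous_on differentiable_imp_continuous_within hasp_differentiable)

lemma Rgen_Ck:
  assumes "closedG G"
  shows "f \<in> Rgen G \<Longrightarrow> Ck n f"
proof (induction n arbitrary: f)
  case 0
  then obtain fu fv where "hasp f fu fv" using Rgen_hasp[OF assms] by blast
  then show ?case using hasp_continuous_on by simp
next
  case (Suc n)
  then obtain fu fv where "fu \<in> Rgen G" "fv \<in> Rgen G" "hasp f fu fv"
    using Rgen_hasp[OF assms] by blast
  then have "Ck n (pd f 1)" "Ck n (pd f \<i>)" "\<forall>z. f differentiable (at z)"
    using Suc.IH hasp_differentiable hasp_pd1 hasp_pdi by metis+
  then show ?case by simp
qed

lemma vec3_sum: "(F :: real^3) = F$1 *\<^sub>R axis 1 1 + F$2 *\<^sub>R axis 2 1 + F$3 *\<^sub>R axis 3 1"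
  by (simp add: vec_eq_iff forall_3)

lemma vec3_has_derivative:
  fixes F :: "complex \<Rightarrow> real^3"
  assumes "\<And>k. hasp (\<lambda>z. F z $ k) (fu k) (fv k)"
  shows "(F has_derivative (\<lambda>w. (Re w * fu 1 z + Im w * fv 1 z) *\<^sub>R axis 1 1
      + (Re w * fu 2 z + Im w * fv 2 z) *\<^sub>R axis 2 1 + (Re w * fu 3 z + Im w * fv 3 z) *\<^sub>R axis 3 1)) (at z)"
proof -
  have e: "F = (\<lambda>z. F z $ 1 *\<^sub>R axis 1 1 + F z $ 2 *\<^sub>R axis 2 1 + F z $ 3 *\<^sub>R axis 3 1)"
    by (rule ext, rule vec3_sum)
  show ?thesis
    apply (subst e)
    apply (rule has_derivative_add has_derivative_scaleR_left hasp_D[OF assms])+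
    done
qed

lemma Rgen_Ck_vec:
  assumes "closedG G"
  shows "(\<And>k. (\<lambda>z. F z $ k) \<in> Rgen G) \<Longrightarrow> Ck n (F :: complex \<Rightarrow> real^3)"
proof (induction n arbitrary: F)
  case 0
  have "\<forall>k. \<exists>fu fv. hasp (\<lambda>z. F z $ k) fu fv"
    using Rgen_hasp[OF assms] 0 by blast
  then obtain fu fv where h: "\<And>k. hasp (\<lambda>z. F z $ k) (fu k) (fv k)" by metis
  show ?case
    using vec3_has_derivative[OF h]
    by (auto intro!: continuous_at_imp_continuous_on has_derivative_continuous)
next
  case (Suc n)
  have "\<forall>k. \<exists>fu fv. fu \<in> Rgen G \<and> fv \<in> Rgen G \<and> hasp (\<lambda>z. F z $ k) fu fv"
    using Rgen_hasp[OF assms] Suc.prems by blast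
  then obtain fu fv where h: "\<And>k. hasp (\<lambda>z. F z $ k) (fu k) (fv k)"
     and r: "\<And>k. fu k \<in> Rgen G" "\<And>k. fv k \<in> Rgen G" by metis
  note d = vec3_has_derivative[OF h]
  have p1: "pd F 1 = (\<lambda>z. fu 1 z *\<^sub>R axis 1 1 + fu 2 z *\<^sub>R axis 2 1 + fu 3 z *\<^sub>R axis 3 1)"
    by (rule ext, subst pd_eq[OF d]) simp
  have pi: "pd F \<i> = (\<lambda>z. fv 1 z *\<^sub>R axis 1 1 + fv 2 z *\<^sub>R axis 2 1 + fv 3 z *\<^sub>R axis 3 1)"
    by (rule ext, subst pd_eq[OF d]) simp
  have c1: "(\<lambda>z. pd F 1 z $ k) = fu k" for k
    unfolding p1 using exhaust_3[of k] by (auto simp: axis_def)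
  have ci: "(\<lambda>z. pd F \<i> z $ k) = fv k" for k
    unfolding pi using exhaust_3[of k] by (auto simp: axis_def)
  show ?case
  proof -
    have "Ck n (pd F 1)" using Suc.IH[of "pd F 1"] c1 r by metis
    moreover have "Ck n (pd F \<i>)" using Suc.IH[of "pd F \<i>"] ci r by metis
    moreover have "\<forall>z. F differentiable (at z)" using d differentiable_def by blast
    ultimately show ?thesis by simp
  qed
qed


lemma hasp_cong: "hasp f fu fv \<Longrightarrow> (\<And>z. fu z = fu' z) \<Longrightarrow> (\<And>z. fv z = fv' z) \<Longrightarrow> hasp f fu' fv'"
proof -
  assume "hasp f fu fv" "\<And>z. fu z = fu' z" "\<And>z. fv z = fv' z"
  then have "fu = fu'" "fv = fv'" by auto
  with \<open>hasp f fu fv\<close> show ?thesis by simp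
qed

lemma hasp_Im_fun: "(\<And>v. DERIV h v :> h' v) \<Longrightarrow> hasp (\<lambda>z. h (Im z)) (\<lambda>z. 0) (\<lambda>z. h' (Im z))"
  by (rule hasp_cong[OF hasp_comp[OF _ hasp_Im]]) auto

lemma hasp_Re_fun: "(\<And>v. DERIV h v :> h' v) \<Longrightarrow> hasp (\<lambda>z. h (Re z)) (\<lambda>z. h' (Re z)) (\<lambda>z. 0)"
  by (rule hasp_cong[OF hasp_comp[OF _ hasp_Re]]) auto

locale surf =
  fixes l1 l2 K :: real and b x3 :: "real \<Rightarrow> real"
  assumes lam: "(l1 > l2 \<and> l2 > 0) \<or> (l1 = 1 \<and> l2 = 1)"
    and Kne: "K \<noteq> 0" and Kabs: "\<bar>K\<bar> < 1"
    and bD: "\<forall>v. (b has_real_derivative bprime l1 l2 K b v) (at v)"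
    and xD: "\<forall>v. (x3 has_real_derivative x3prime l1 l2 K b v) (at v)"
begin

lemma l1pos: "l1 > 0" and l2pos: "l2 > 0" and l21: "l2 \<le> l1"
  using lam by auto

lemma l1ne: "l1 \<noteq> 0" and l2ne: "l2 \<noteq> 0" using l1pos l2pos by auto

definition Wb :: "real \<Rightarrow> real" where
  "Wb t = l1^2 * (cos t)^2 + l2^2 * (sin t)^2"

lemma Wb_bounds: "0 \<le> Wb t" "Wb t \<le> l1^2"
proof -
  show "0 \<le> Wb t" unfolding Wb_def by simp
  have "l2^2 \<le> l1^2" using l21 l2pos by (simp add: power_mono)
  then have "Wb t \<le> l1^2 * (cos t)^2 + l1^2 * (sin t)^2"
    unfolding Wb_def by (simp add: mult_right_mono)
  also have "\<dots> = l1^2" by (simp add: algebra_simps flip: distrib_left)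
  finally show "Wb t \<le> l1^2" .
qed

lemma Q_pos: "l1^2 - K * Wb t > 0"
proof (cases "K > 0")
  case True
  then have "K * Wb t \<le> K * l1^2" using Wb_bounds by (simp add: mult_left_mono)
  also have "\<dots> < l1^2" using True Kabs l1pos by simp
  finally show ?thesis by simp
next
  case False
  then have "K * Wb t \<le> 0" using Wb_bounds by (simp add: mult_nonpos_nonneg)
  moreover have "l1^2 > 0" using l1pos by simp
  ultimately show ?thesis by linarith
qed

definition Bf :: "real \<Rightarrow> real" where "Bf v = bprime l1 l2 K b v"
definition Pf :: "real \<Rightarrow> real" where "Pf v = x3prime l1 l2 K b v"

lemma Bf_eq: "Bf v = sqrt (l1^2 - K * Wb (b v))"
  by (simp add: Bf_def bprime_def Wb_def)

lemma Bf_nonneg: "Bf v \<ge> 0" unfolding Bf_eq by (rule real_sqrt_ge_zero) (use Q_pos[of "b v"] in linarith)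

lemma Bf_sq: "Bf v ^ 2 = l1^2 - K * Wb (b v)"
proof -
  have "0 \<le> l1^2 - K * Wb (b v)" using Q_pos[of "b v"] by linarith
  then show ?thesis unfolding Bf_eq by (rule real_sqrt_pow2)
qed

lemma den_pos: "l1 + Bf v > 0" using Bf_nonneg[of v] l1pos by simp

lemma Pf_eq: "Pf v = l1 * l2 * K / (l1 + Bf v)"
  by (simp add: Pf_def x3prime_def Bf_def)

lemma Pf_ne: "Pf v \<noteq> 0"
  using den_pos[of v] Kne l1pos l2pos by (simp add: Pf_eq)

lemma kappa: "Pf v * Wb (b v) = l1 * l2 * (l1 - Bf v)"
proof -
  have d: "l1 + Bf v \<noteq> 0" using den_pos[of v] by simp
  have "Pf v * Wb (b v) * (l1 + Bf v) = l1 * l2 * (K * Wb (b v))"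
    using d by (simp add: Pf_eq)
  also have "\<dots> = l1 * l2 * (l1^2 - Bf v^2)"
    using Bf_sq[of v] by simp
  also have "\<dots> = l1 * l2 * (l1 - Bf v) * (l1 + Bf v)"
    by (simp add: algebra_simps power2_eq_square)
  finally show ?thesis using d by simp
qed

definition dB :: "real \<Rightarrow> real" where
  "dB v = K * (l1^2 - l2^2) * sin (b v) * cos (b v)"

lemma bD': "DERIV b v :> Bf v" using bD by (simp add: Bf_def)
lemma xD': "DERIV x3 v :> Pf v" using xD by (simp add: Pf_def)

lemma Bf_deriv: "DERIV Bf v :> dB v"
proof -
  have q: "0 < l1^2 - K * Wb (b v)" by (rule Q_pos)
  have Qd: "DERIV (\<lambda>v. l1^2 - K * Wb (b v)) v :>
      - (K * (l1^2 * (2 * cos (b v) * (- sin (b v) * Bf v)) + l2^2 * (2 * sin (b v) * (cos (b v) * Bf v))))"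
    unfolding Wb_def
    by (rule derivative_eq_intros bD' refl | simp)+
  have "DERIV (\<lambda>v. sqrt (l1^2 - K * Wb (b v))) v :>
     inverse (sqrt (l1^2 - K * Wb (b v))) / 2 *
      (- (K * (l1^2 * (2 * cos (b v) * (- sin (b v) * Bf v)) + l2^2 * (2 * sin (b v) * (cos (b v) * Bf v)))))"
    by (rule DERIV_chain2[OF DERIV_real_sqrt[OF q] Qd])
  moreover have "inverse (sqrt (l1^2 - K * Wb (b v))) / 2 *
      (- (K * (l1^2 * (2 * cos (b v) * (- sin (b v) * Bf v)) + l2^2 * (2 * sin (b v) * (cos (b v) * Bf v)))))
     = dB v"
    using q by (simp add: Bf_eq dB_def field_simps)
  moreover have "Bf = (\<lambda>v. sqrt (l1^2 - K * Wb (b v)))" by (simp add: Bf_eq fun_eq_iff)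
  ultimately show ?thesis by simp
qed

lemma aux_dP: "D \<noteq> 0 \<Longrightarrow> l1 \<noteq> 0 \<Longrightarrow> l2 \<noteq> 0 \<Longrightarrow>
  - (l1 * l2 * K * (0 + K * dd * s * c)) / (D * D) = - ((l1 * l2 * K / D) * (l1 * l2 * K / D)) * dd * s * c / (l1 * l2)"
  by (simp add: field_simps)

definition dP :: "real \<Rightarrow> real" where
  "dP v = - (Pf v * Pf v) * (l1^2 - l2^2) * sin (b v) * cos (b v) / (l1 * l2)"

lemma Pf_deriv: "DERIV Pf v :> dP v"
proof -
  have d: "l1 + Bf v \<noteq> 0" using den_pos[of v] by simp
  have "DERIV (\<lambda>v. l1 * l2 * K / (l1 + Bf v)) v :> - (l1 * l2 * K * (0 + dB v)) / ((l1 + Bf v) * (l1 + Bf v))"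
    by (rule derivative_eq_intros Bf_deriv refl d | simp)+
  moreover have "- (l1 * l2 * K * (0 + dB v)) / ((l1 + Bf v) * (l1 + Bf v)) = dP v"
    unfolding dP_def dB_def Pf_eq using aux_dP[OF d l1ne l2ne] by (simp add: mult.assoc)
  ultimately show ?thesis by (simp add: Pf_eq[abs_def])
qed

end


lemma id_p1:
  fixes s c P B l1 l2 m :: real
  assumes hs: "s^2 + c^2 = 1" and hk: "P * (l1^2 * c^2 + l2^2 * s^2) = l1 * l2 * (l1 - B)"
    and "l1 \<noteq> 0" "l2 \<noteq> 0"
  shows "m * ((- (P * P) * (l1^2 - l2^2) * s * c / (l1 * l2)) * s + P * (c * B)) / l1
       = m * P * c + P * (- m * P * c / l2)"
  using assms by (simp add: field_simps; algebra)

lemma id_p2: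
  fixes s c P B l1 l2 m :: real
  assumes hs: "s^2 + c^2 = 1" and hk: "P * (l1^2 * c^2 + l2^2 * s^2) = l1 * l2 * (l1 - B)"
    and "l1 \<noteq> 0" "l2 \<noteq> 0"
  shows "- (m * ((- (P * P) * (l1^2 - l2^2) * s * c / (l1 * l2)) * c - P * (s * B))) / l2
       = m * (l1 / l2) * P * s - P * (m * P * s / l1)"
  using assms by (simp add: field_simps; algebra)

lemma id_T1:
  fixes s c P B l1 l2 m :: real
  assumes hs: "s^2 + c^2 = 1" and hk: "P * (l1^2 * c^2 + l2^2 * s^2) = l1 * l2 * (l1 - B)"
    and "l1 \<noteq> 0" "l2 \<noteq> 0"
  shows "l1^2 * (m * P * s / l1) + (m * ((- (P * P) * (l1^2 - l2^2) * s * c / (l1 * l2)) * c - P * B * s)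
      - P * (m * (l1 / l2) * P * s)) + (l1^2 - l2^2) * P * (m * (l1 / l2) * P * s) / l1^2 = 0"
  using assms by (simp add: field_simps; algebra)

lemma id_T2:
  fixes s c P B l1 l2 m :: real
  assumes hs: "s^2 + c^2 = 1" and hk: "P * (l1^2 * c^2 + l2^2 * s^2) = l1 * l2 * (l1 - B)"
    and "l1 \<noteq> 0" "l2 \<noteq> 0"
  shows "l1^2 * (- m * P * c / l2) + (m * (l1 / l2) * ((- (P * P) * (l1^2 - l2^2) * s * c / (l1 * l2)) * s + P * B * c)
      + P * (m * P * c)) + (l1^2 - l2^2) * P * (m * P * c) / l2^2 = 0"
  using assms by (simp add: field_simps; algebra)

lemma id_T3:
  fixes s c P S C l1 l2 :: real
  assumes "C^2 = S^2 + 1" "l1 \<noteq> 0" "l2 \<noteq> 0"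
  shows "- (P * P) * (l1^2 - l2^2) * s * c / (l1 * l2)
     - l1^2 * l2^2 * (l1^2 - l2^2) * (l1^2 * C^2 * ((1 / (l1^2 * l2)) * P * s / l1) * (- (1 / (l1^2 * l2)) * P * c / l2)
        + S^2 * ((1 / (l1^2 * l2)) * P * c) * ((1 / (l1^2 * l2)) * (l1 / l2) * P * s)) = 0"
  apply (simp add: assms(1))
  using assms(2,3)
  apply (simp add: field_simps)
  apply algebra
  done


context surf begin

definition m :: real where "m = 1 / (l1^2 * l2)"

definition p1f :: "real \<Rightarrow> real" where "p1f v = m * Pf v * sin (b v) / l1"
definition p2f :: "real \<Rightarrow> real" where "p2f v = - m * Pf v * cos (b v) / l2"
definition q1f :: "real \<Rightarrow> real" where "q1f v = m * Pf v * cos (b v)"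
definition q2f :: "real \<Rightarrow> real" where "q2f v = m * (l1 / l2) * Pf v * sin (b v)"
definition dq1 :: "real \<Rightarrow> real" where "dq1 v = m * (dP v * cos (b v) - Pf v * Bf v * sin (b v))"
definition dq2 :: "real \<Rightarrow> real" where "dq2 v = m * (l1 / l2) * (dP v * sin (b v) + Pf v * Bf v * cos (b v))"

lemma hs: "sin (t::real) ^ 2 + cos t ^ 2 = 1" by simp
lemma hk: "Pf v * (l1^2 * cos (b v) ^ 2 + l2^2 * sin (b v) ^ 2) = l1 * l2 * (l1 - Bf v)"
  using kappa[of v] by (simp add: Wb_def)

lemma p1f_deriv: "DERIV p1f v :> q1f v + Pf v * p2f v"
proof -
  have "DERIV p1f v :> m * (dP v * sin (b v) + Pf v * (cos (b v) * Bf v)) / l1"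
    unfolding p1f_def[abs_def]
    apply (rule derivative_eq_intros Pf_deriv bD' refl | simp add: l1ne l2ne)+
    apply (simp_all add: field_simps l1ne l2ne)?
    done
  moreover have "m * (dP v * sin (b v) + Pf v * (cos (b v) * Bf v)) / l1 = q1f v + Pf v * p2f v"
    unfolding dP_def q1f_def p2f_def by (rule id_p1[OF hs hk l1ne l2ne])
  ultimately show ?thesis by simp
qed

lemma p2f_deriv: "DERIV p2f v :> q2f v - Pf v * p1f v"
proof -
  have "DERIV p2f v :> - (m * (dP v * cos (b v) - Pf v * (sin (b v) * Bf v))) / l2"
    unfolding p2f_def[abs_def]
    apply (rule derivative_eq_intros Pf_deriv bD' refl | simp add: l1ne l2ne)+
    apply (simp_all add: field_simps l1ne l2ne)?
    done
  moreover have "- (m * (dP v * cos (b v) - Pf v * (sin (b v) * Bf v))) / l2 = q2f v - Pf v * p1f v"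
    unfolding dP_def q2f_def p1f_def by (rule id_p2[OF hs hk l1ne l2ne])
  ultimately show ?thesis by simp
qed

lemma q1f_deriv: "DERIV q1f v :> dq1 v"
  unfolding q1f_def[abs_def] dq1_def
  by (rule derivative_eq_intros Pf_deriv bD' refl | simp add: algebra_simps)+

lemma q2f_deriv: "DERIV q2f v :> dq2 v"
  unfolding q2f_def[abs_def] dq2_def
  by (rule derivative_eq_intros Pf_deriv bD' refl | simp add: algebra_simps)+

definition Sz :: "complex \<Rightarrow> real" where "Sz z = sinh (- l1 * Re z)"
definition Cz :: "complex \<Rightarrow> real" where "Cz z = cosh (- l1 * Re z)"

lemma Sz_hasp: "hasp Sz (\<lambda>z. - l1 * Cz z) (\<lambda>z. 0)"
proof -
  have "DERIV (\<lambda>u. sinh (- l1 * u)) u :> - l1 * cosh (- l1 * u)" for u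
    by (rule derivative_eq_intros refl | simp)+
  from hasp_Re_fun[of "\<lambda>u. sinh (- l1 * u)", OF this]
  show ?thesis unfolding Sz_def Cz_def .
qed

lemma Cz_hasp: "hasp Cz (\<lambda>z. - l1 * Sz z) (\<lambda>z. 0)"
proof -
  have "DERIV (\<lambda>u. cosh (- l1 * u)) u :> - l1 * sinh (- l1 * u)" for u
    by (rule derivative_eq_intros refl | simp)+
  from hasp_Re_fun[of "\<lambda>u. cosh (- l1 * u)", OF this]
  show ?thesis unfolding Sz_def Cz_def .
qed

lemma hasp_SV:
  assumes "\<And>v. DERIV f v :> f' v"
  shows "hasp (\<lambda>z. Sz z * f (Im z)) (\<lambda>z. - l1 * Cz z * f (Im z)) (\<lambda>z. Sz z * f' (Im z))"
  by (rule hasp_cong[OF hasp_mult[OF Sz_hasp hasp_Im_fun[OF assms]]]) auto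

lemma hasp_CV:
  assumes "\<And>v. DERIV f v :> f' v"
  shows "hasp (\<lambda>z. - l1 * Cz z * f (Im z)) (\<lambda>z. l1^2 * Sz z * f (Im z)) (\<lambda>z. - l1 * Cz z * f' (Im z))"
  by (rule hasp_cong[OF hasp_mult[OF hasp_mult[OF hasp_const Cz_hasp] hasp_Im_fun[OF assms]]])
     (auto simp: power2_eq_square)

lemma th_hasp: "hasp (\<lambda>z. x3 (Im z)) (\<lambda>z. 0) (\<lambda>z. Pf (Im z))"
  by (rule hasp_Im_fun[OF xD'])

lemma P_hasp: "hasp (\<lambda>z. Pf (Im z)) (\<lambda>z. 0) (\<lambda>z. dP (Im z))"
  by (rule hasp_Im_fun[OF Pf_deriv])

definition Xr :: "complex \<Rightarrow> real^3" where
  "Xr z = rot (x3 (Im z)) (Sz z * p1f (Im z)) (Sz z * p2f (Im z)) (x3 (Im z))"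
definition Xu :: "complex \<Rightarrow> real^3" where
  "Xu z = rot (x3 (Im z)) (- l1 * Cz z * p1f (Im z)) (- l1 * Cz z * p2f (Im z)) 0"
definition Xv :: "complex \<Rightarrow> real^3" where
  "Xv z = rot (x3 (Im z)) (Sz z * q1f (Im z)) (Sz z * q2f (Im z)) (Pf (Im z))"
definition Xuu :: "complex \<Rightarrow> real^3" where
  "Xuu z = rot (x3 (Im z)) (l1^2 * Sz z * p1f (Im z)) (l1^2 * Sz z * p2f (Im z)) 0"
definition Xuv :: "complex \<Rightarrow> real^3" where
  "Xuv z = rot (x3 (Im z)) (- l1 * Cz z * q1f (Im z)) (- l1 * Cz z * q2f (Im z)) 0"
definition Xvv :: "complex \<Rightarrow> real^3" where
  "Xvv z = rot (x3 (Im z)) (Sz z * dq1 (Im z) - Pf (Im z) * (Sz z * q2f (Im z)))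
                         (Sz z * dq2 (Im z) + Pf (Im z) * (Sz z * q1f (Im z))) (dP (Im z))"

lemma Xr_deriv: "(Xr has_derivative (\<lambda>w. Re w *\<^sub>R Xu z + Im w *\<^sub>R Xv z)) (at z)"
proof -
  have "(Xr has_derivative (\<lambda>w. Re w *\<^sub>R rot (x3 (Im z)) (- l1 * Cz z * p1f (Im z) - 0 * (Sz z * p2f (Im z)))
          (- l1 * Cz z * p2f (Im z) + 0 * (Sz z * p1f (Im z))) 0
       + Im w *\<^sub>R rot (x3 (Im z)) (Sz z * (q1f (Im z) + Pf (Im z) * p2f (Im z)) - Pf (Im z) * (Sz z * p2f (Im z)))
          (Sz z * (q2f (Im z) - Pf (Im z) * p1f (Im z)) + Pf (Im z) * (Sz z * p1f (Im z))) (Pf (Im z)))) (at z)"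
    unfolding Xr_def[abs_def]
    by (rule hasp_rot[OF th_hasp hasp_SV[OF p1f_deriv] hasp_SV[OF p2f_deriv] th_hasp])
  then show ?thesis
    by (simp add: Xu_def Xv_def algebra_simps)
qed

lemma Xu_deriv: "(Xu has_derivative (\<lambda>w. Re w *\<^sub>R Xuu z + Im w *\<^sub>R Xuv z)) (at z)"
proof -
  have "(Xu has_derivative (\<lambda>w. Re w *\<^sub>R rot (x3 (Im z)) (l1^2 * Sz z * p1f (Im z) - 0 * (- l1 * Cz z * p2f (Im z)))
          (l1^2 * Sz z * p2f (Im z) + 0 * (- l1 * Cz z * p1f (Im z))) 0
       + Im w *\<^sub>R rot (x3 (Im z)) (- l1 * Cz z * (q1f (Im z) + Pf (Im z) * p2f (Im z)) - Pf (Im z) * (- l1 * Cz z * p2f (Im z)))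
          (- l1 * Cz z * (q2f (Im z) - Pf (Im z) * p1f (Im z)) + Pf (Im z) * (- l1 * Cz z * p1f (Im z))) 0)) (at z)"
    unfolding Xu_def[abs_def]
    by (rule hasp_rot[OF th_hasp hasp_CV[OF p1f_deriv] hasp_CV[OF p2f_deriv] hasp_const])
  then show ?thesis
    by (simp add: Xuu_def Xuv_def algebra_simps)
qed

lemma Xv_deriv: "(Xv has_derivative (\<lambda>w. Re w *\<^sub>R Xuv z + Im w *\<^sub>R Xvv z)) (at z)"
proof -
  have "(Xv has_derivative (\<lambda>w. Re w *\<^sub>R rot (x3 (Im z)) (- l1 * Cz z * q1f (Im z) - 0 * (Sz z * q2f (Im z)))
          (- l1 * Cz z * q2f (Im z) + 0 * (Sz z * q1f (Im z))) 0
       + Im w *\<^sub>R rot (x3 (Im z)) (Sz z * dq1 (Im z) - Pf (Im z) * (Sz z * q2f (Im z)))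
          (Sz z * dq2 (Im z) + Pf (Im z) * (Sz z * q1f (Im z))) (dP (Im z)))) (at z)"
    unfolding Xv_def[abs_def]
    by (rule hasp_rot[OF th_hasp hasp_SV[OF q1f_deriv] hasp_SV[OF q2f_deriv] P_hasp])
  then show ?thesis
    by (simp add: Xuv_def Xvv_def algebra_simps)
qed

lemma pdX1: "pd Xr 1 z = Xu z" using pd_eq[OF Xr_deriv, of 1] by simp
lemma pdXi: "pd Xr \<i> z = Xv z" using pd_eq[OF Xr_deriv, of \<i>] by simp
lemma pdXu1: "pd Xu 1 z = Xuu z" using pd_eq[OF Xu_deriv, of 1] by simp
lemma pdXvi: "pd Xv \<i> z = Xvv z" using pd_eq[OF Xv_deriv, of \<i>] by simp

end


lemma ginner_rot':
  "p$3 = t \<Longrightarrow> ginner l1 l2 p (rot t a b c) (rot t a' b' c') =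
     l1^2 * a * a' + l2^2 * b * b' + c * c' / (l1^2 * l2^2)"
  using ginner_rot by blast

lemma ginner_add1: "ginner l1 l2 p (v + w) x = ginner l1 l2 p v x + ginner l1 l2 p w x"
  by (simp add: ginner_def theta1_def theta2_def algebra_simps add_divide_distrib)

lemma ginner_zero1: "ginner l1 l2 p 0 x = 0"
  by (simp add: ginner_def theta1_def theta2_def)

lemma normal_part_add:
  "normal_part l1 l2 X z (v + w) = normal_part l1 l2 X z v + normal_part l1 l2 X z w"
  by (simp add: normal_part_def ginner_add1 distrib_left scaleR_add_left sum.distrib algebra_simps)

lemma normal_part_zero: "normal_part l1 l2 X z 0 = 0"
  by (simp add: normal_part_def ginner_zero1)

lemma covd_eq: "covd l1 l2 X a c z = pd (pd X c) a z + Gam l1 l2 (X z) (pd X a z) (pd X c z)"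
  by (simp add: covd_def Gam_def vec_eq_iff)

lemma mcv_zero:
  assumes "conformal l1 l2 X" "covd l1 l2 X 1 1 z + covd l1 l2 X \<i> \<i> z = 0"
  shows "mean_curv_vec l1 l2 X z = 0"
proof -
  have E: "fff l1 l2 X 1 1 z = fff l1 l2 X \<i> \<i> z" and F: "fff l1 l2 X 1 \<i> z = 0"
    using assms(1) by (auto simp: conformal_def)
  have i1: "(\<i>::complex) \<noteq> 1" by (simp add: complex_eq_iff)
  define q where "q = fff l1 l2 X \<i> \<i> z / (fff l1 l2 X 1 1 z * fff l1 l2 X \<i> \<i> z - (fff l1 l2 X 1 \<i> z)^2)"
  have f11: "fffinv l1 l2 X 1 1 z = q" using E by (simp add: fffinv_def q_def Let_def)
  have fii: "fffinv l1 l2 X \<i> \<i> z = q" using E i1 by (simp add: fffinv_def q_def Let_def)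
  have f1i: "fffinv l1 l2 X 1 \<i> z = 0" using F i1 by (simp add: fffinv_def Let_def)
  have fi1: "fffinv l1 l2 X \<i> 1 z = 0" using F i1 by (simp add: fffinv_def Let_def)
  have "mean_curv_vec l1 l2 X z = (1/2) *\<^sub>R (q *\<^sub>R normal_part l1 l2 X z (covd l1 l2 X 1 1 z)
         + q *\<^sub>R normal_part l1 l2 X z (covd l1 l2 X \<i> \<i> z))"
    unfolding mean_curv_vec_def using i1 by (simp add: f11 fii f1i fi1)
  also have "\<dots> = (1/2) *\<^sub>R (q *\<^sub>R normal_part l1 l2 X z (covd l1 l2 X 1 1 z + covd l1 l2 X \<i> \<i> z))"
    by (simp add: normal_part_add scaleR_add_right)
  also have "\<dots> = 0" using assms(2) by (simp add: normal_part_zero)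
  finally show ?thesis .
qed

context surf begin

lemma CS: "Cz z ^ 2 = Sz z ^ 2 + 1" by (simp add: Cz_def Sz_def cosh_square_eq)
lemma Cz_pos: "Cz z > 0" by (simp add: Cz_def)

lemma Xr3: "Xr z $ 3 = x3 (Im z)" by (simp add: Xr_def)

lemma surfX_eq: "surfX l1 l2 K b x3 = Xr"
proof
  fix z
  show "surfX l1 l2 K b x3 z = Xr z"
    unfolding surfX_def Let_def Xr_def rot_def
    by (simp add: vec_eq_iff forall_3 p1f_def p2f_def m_def Pf_def Sz_def algebra_simps)
qed

lemma pdX1': "pd Xr 1 = Xu" using pdX1 by (simp add: fun_eq_iff)
lemma pdXi': "pd Xr \<i> = Xv" using pdXi by (simp add: fun_eq_iff)

lemma conf_E: "fff l1 l2 Xr 1 1 z = fff l1 l2 Xr \<i> \<i> z"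
proof -
  have "fff l1 l2 Xr 1 1 z = l1^2 * (- l1 * Cz z * p1f (Im z)) * (- l1 * Cz z * p1f (Im z))
      + l2^2 * (- l1 * Cz z * p2f (Im z)) * (- l1 * Cz z * p2f (Im z))"
    unfolding fff_def pdX1 Xu_def by (simp add: ginner_rot'[OF Xr3])
  moreover have "fff l1 l2 Xr \<i> \<i> z = l1^2 * (Sz z * q1f (Im z)) * (Sz z * q1f (Im z))
      + l2^2 * (Sz z * q2f (Im z)) * (Sz z * q2f (Im z)) + Pf (Im z) * Pf (Im z) / (l1^2 * l2^2)"
    unfolding fff_def pdXi Xv_def by (simp add: ginner_rot'[OF Xr3])
  moreover have "l1^2 * (- l1 * Cz z * p1f (Im z)) * (- l1 * Cz z * p1f (Im z))
      + l2^2 * (- l1 * Cz z * p2f (Im z)) * (- l1 * Cz z * p2f (Im z))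
     = l1^2 * (Sz z * q1f (Im z)) * (Sz z * q1f (Im z))
      + l2^2 * (Sz z * q2f (Im z)) * (Sz z * q2f (Im z)) + Pf (Im z) * Pf (Im z) / (l1^2 * l2^2)"
    unfolding p1f_def p2f_def q1f_def q2f_def m_def
    using CS[of z] hs[of "b (Im z)"] l1ne l2ne
    by (simp add: field_simps; algebra)
  ultimately show ?thesis by simp
qed

lemma conf_F: "fff l1 l2 Xr 1 \<i> z = 0"
proof -
  have "fff l1 l2 Xr 1 \<i> z = l1^2 * (- l1 * Cz z * p1f (Im z)) * (Sz z * q1f (Im z))
      + l2^2 * (- l1 * Cz z * p2f (Im z)) * (Sz z * q2f (Im z))"
    unfolding fff_def pdX1 pdXi Xu_def Xv_def by (simp add: ginner_rot'[OF Xr3])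
  also have "\<dots> = 0"
    unfolding p1f_def p2f_def q1f_def q2f_def m_def
    using l1ne l2ne by (simp add: field_simps; simp add: algebra_simps eval_nat_numeral)
  finally show ?thesis .
qed

lemma conformal_Xr: "conformal l1 l2 Xr"
  unfolding conformal_def using conf_E conf_F by blast

end


lemma theta1_add: "theta1 t (x + y) = theta1 t x + theta1 t y"
  by (simp add: theta1_def algebra_simps)
lemma theta2_add: "theta2 t (x + y) = theta2 t x + theta2 t y"
  by (simp add: theta2_def algebra_simps)

context surf begin

lemma Gam_frame_Xr:
  "theta1 (x3 (Im z)) (Gam l1 l2 (Xr z) V W) =
     (l1^2 - l2^2) / (2 * l1^2) * (theta2 (x3 (Im z)) V * W$3 + theta2 (x3 (Im z)) W * V$3)"
  "theta2 (x3 (Im z)) (Gam l1 l2 (Xr z) V W) =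
     (l1^2 - l2^2) / (2 * l2^2) * (theta1 (x3 (Im z)) V * W$3 + theta1 (x3 (Im z)) W * V$3)"
  "Gam l1 l2 (Xr z) V W $ 3 =
     - (l1^2 * l2^2 * (l1^2 - l2^2) / 2) * (theta1 (x3 (Im z)) V * theta2 (x3 (Im z)) W + theta2 (x3 (Im z)) V * theta1 (x3 (Im z)) W)"
  using Gam_frame[OF l1ne l2ne, of "Xr z" V W] by (simp_all add: Xr3)

lemma tension: "covd l1 l2 Xr 1 1 z + covd l1 l2 Xr \<i> \<i> z = 0"
proof -
  define t where "t = x3 (Im z)"
  define T where "T = covd l1 l2 Xr 1 1 z + covd l1 l2 Xr \<i> \<i> z"
  have T: "T = Xuu z + Gam l1 l2 (Xr z) (Xu z) (Xu z) + (Xvv z + Gam l1 l2 (Xr z) (Xv z) (Xv z))"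
    unfolding T_def covd_eq pdX1' pdXi' pdXu1 pdXvi ..
  have e1: "theta1 t T = 0"
    unfolding T t_def theta1_add Gam_frame_Xr
    unfolding Xuu_def Xvv_def Xu_def Xv_def theta1_rot theta2_rot rot_nth
    unfolding p1f_def p2f_def q1f_def q2f_def dq1_def dq2_def dP_def m_def
    using hs[of "b (Im z)"] hk[of "Im z"] l1ne l2ne
    by (simp add: field_simps; algebra)
  have e2: "theta2 t T = 0"
    unfolding T t_def theta2_add Gam_frame_Xr
    unfolding Xuu_def Xvv_def Xu_def Xv_def theta1_rot theta2_rot rot_nth
    unfolding p1f_def p2f_def q1f_def q2f_def dq1_def dq2_def dP_def m_def
    using hs[of "b (Im z)"] hk[of "Im z"] l1ne l2ne
    by (simp add: field_simps; algebra)
  have e3: "T $ 3 = 0"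
    unfolding T t_def vector_add_component Gam_frame_Xr
    unfolding Xuu_def Xvv_def Xu_def Xv_def theta1_rot theta2_rot rot_nth
    unfolding p1f_def p2f_def q1f_def q2f_def dq1_def dq2_def dP_def m_def
    using CS[of z] l1ne l2ne
    by (simp add: field_simps; algebra)
  have "T = rot t (theta1 t T) (theta2 t T) (T $ 3)" by (rule vec_as_rot)
  also have "\<dots> = 0" using e1 e2 e3 rot_zero by simp
  finally show ?thesis unfolding T_def .
qed

lemma minimal_Xr: "minimal l1 l2 Xr"
  unfolding minimal_def using mcv_zero[OF conformal_Xr tension] by blast

end


lemma Rgen_diff: "f \<in> Rgen G \<Longrightarrow> g \<in> Rgen G \<Longrightarrow> (\<lambda>z. f z - g z) \<in> Rgen G"
proof -
  assume a: "f \<in> Rgen G" "g \<in> Rgen G"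
  have "(\<lambda>z. f z + (-1) * g z) \<in> Rgen G" by (intro Rgen.add Rgen.mult Rgen.const a)
  moreover have "(\<lambda>z. f z + (-1) * g z) = (\<lambda>z. f z - g z)" by simp
  ultimately show ?thesis by simp
qed

context surf begin

definition iz :: "complex \<Rightarrow> real" where "iz z = 1 / (l1 + Bf (Im z))"

definition GG :: "(complex \<Rightarrow> real) set" where
  "GG = {Sz, Cz, (\<lambda>z. x3 (Im z)), (\<lambda>z. sin (x3 (Im z))), (\<lambda>z. cos (x3 (Im z))),
         (\<lambda>z. sin (b (Im z))), (\<lambda>z. cos (b (Im z))), (\<lambda>z. Bf (Im z)), iz}"

lemma Pf_iz: "Pf v = (l1 * l2 * K) * (1 / (l1 + Bf v))" by (simp add: Pf_eq)

lemma hasp_gen: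
  assumes "\<And>v. DERIV h v :> h' v" "\<And>v. h' v = k v"
  shows "hasp (\<lambda>z. h (Im z)) (\<lambda>z. 0) (\<lambda>z. k (Im z))"
  using hasp_Im_fun[OF assms(1)] assms(2) by simp


lemma closedGG: "closedG GG"
  unfolding closedG_def
proof (intro ballI)
  fix g assume "g \<in> GG"
  then consider "g = Sz" | "g = Cz" | "g = (\<lambda>z. x3 (Im z))" | "g = (\<lambda>z. sin (x3 (Im z)))"
    | "g = (\<lambda>z. cos (x3 (Im z)))" | "g = (\<lambda>z. sin (b (Im z)))" | "g = (\<lambda>z. cos (b (Im z)))"
    | "g = (\<lambda>z. Bf (Im z))" | "g = iz"
    unfolding GG_def by blast
  then show "\<exists>gu gv. gu \<in> Rgen GG \<and> gv \<in> Rgen GG \<and> hasp g gu gv"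
  proof cases
    case 1
    have "(\<lambda>z. - l1 * Cz z) \<in> Rgen GG" "(\<lambda>z. 0) \<in> Rgen GG" by (rule Rgen.mult Rgen.add | rule Rgen.const | (rule Rgen.gen, simp add: GG_def))+
    then show ?thesis using 1 Sz_hasp by blast
  next
    case 2
    have "(\<lambda>z. - l1 * Sz z) \<in> Rgen GG" "(\<lambda>z. 0) \<in> Rgen GG" by (rule Rgen.mult Rgen.add | rule Rgen.const | (rule Rgen.gen, simp add: GG_def))+
    then show ?thesis using 2 Cz_hasp by blast
  next
    case 3
    have "hasp g (\<lambda>z. 0) (\<lambda>z. (l1 * l2 * K) * iz z)"
      unfolding 3 iz_def by (rule hasp_gen[OF xD' Pf_iz])
    moreover have "(\<lambda>z. (l1 * l2 * K) * iz z) \<in> Rgen GG" "(\<lambda>z. 0) \<in> Rgen GG" by (rule Rgen.mult Rgen.add | rule Rgen.const | (rule Rgen.gen, simp add: GG_def))+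
    ultimately show ?thesis by blast
  next
    case 4
    have d: "DERIV (\<lambda>v. sin (x3 v)) v :> cos (x3 v) * Pf v" for v
      by (rule derivative_eq_intros xD' refl | simp)+
    have "hasp g (\<lambda>z. 0) (\<lambda>z. cos (x3 (Im z)) * ((l1 * l2 * K) * iz z))"
      unfolding 4 iz_def by (rule hasp_gen[OF d]) (simp add: Pf_iz)
    moreover have "(\<lambda>z. cos (x3 (Im z)) * ((l1 * l2 * K) * iz z)) \<in> Rgen GG" "(\<lambda>z. 0) \<in> Rgen GG" by (rule Rgen.mult Rgen.add | rule Rgen.const | (rule Rgen.gen, simp add: GG_def))+
    ultimately show ?thesis by blast
  next
    case 5
    have d: "DERIV (\<lambda>v. cos (x3 v)) v :> - sin (x3 v) * Pf v" for v
      by (rule derivative_eq_intros xD' refl | simp)+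
    have "hasp g (\<lambda>z. 0) (\<lambda>z. (-1 * sin (x3 (Im z))) * ((l1 * l2 * K) * iz z))"
      unfolding 5 iz_def by (rule hasp_gen[OF d]) (simp add: Pf_iz)
    moreover have "(\<lambda>z. (-1 * sin (x3 (Im z))) * ((l1 * l2 * K) * iz z)) \<in> Rgen GG" "(\<lambda>z. 0) \<in> Rgen GG" by (rule Rgen.mult Rgen.add | rule Rgen.const | (rule Rgen.gen, simp add: GG_def))+
    ultimately show ?thesis by blast
  next
    case 6
    have d: "DERIV (\<lambda>v. sin (b v)) v :> cos (b v) * Bf v" for v
      by (rule derivative_eq_intros bD' refl | simp)+
    have "hasp g (\<lambda>z. 0) (\<lambda>z. cos (b (Im z)) * Bf (Im z))"
      unfolding 6 by (rule hasp_gen[OF d]) simp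
    moreover have "(\<lambda>z. cos (b (Im z)) * Bf (Im z)) \<in> Rgen GG" "(\<lambda>z. 0) \<in> Rgen GG" by (rule Rgen.mult Rgen.add | rule Rgen.const | (rule Rgen.gen, simp add: GG_def))+
    ultimately show ?thesis by blast
  next
    case 7
    have d: "DERIV (\<lambda>v. cos (b v)) v :> - sin (b v) * Bf v" for v
      by (rule derivative_eq_intros bD' refl | simp)+
    have "hasp g (\<lambda>z. 0) (\<lambda>z. (-1 * sin (b (Im z))) * Bf (Im z))"
      unfolding 7 by (rule hasp_gen[OF d]) simp
    moreover have "(\<lambda>z. (-1 * sin (b (Im z))) * Bf (Im z)) \<in> Rgen GG" "(\<lambda>z. 0) \<in> Rgen GG" by (rule Rgen.mult Rgen.add | rule Rgen.const | (rule Rgen.gen, simp add: GG_def))+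
    ultimately show ?thesis by blast
  next
    case 8
    have "hasp g (\<lambda>z. 0) (\<lambda>z. (K * (l1^2 - l2^2)) * (sin (b (Im z)) * cos (b (Im z))))"
      unfolding 8 by (rule hasp_gen[OF Bf_deriv]) (simp add: dB_def)
    moreover have "(\<lambda>z. (K * (l1^2 - l2^2)) * (sin (b (Im z)) * cos (b (Im z)))) \<in> Rgen GG" "(\<lambda>z. 0) \<in> Rgen GG" by (rule Rgen.mult Rgen.add | rule Rgen.const | (rule Rgen.gen, simp add: GG_def))+
    ultimately show ?thesis by blast
  next
    case 9
    have d: "DERIV (\<lambda>v. 1 / (l1 + Bf v)) v :> - (0 + dB v) / ((l1 + Bf v) * (l1 + Bf v))" for v
      using den_pos[of v] by (intro derivative_eq_intros Bf_deriv refl) (auto simp: Bf_deriv)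
    have "hasp g (\<lambda>z. 0) (\<lambda>z. (- (K * (l1^2 - l2^2))) * (sin (b (Im z)) * cos (b (Im z))) * (iz z * iz z))"
      unfolding 9 iz_def by (rule hasp_gen[OF d]) (simp add: dB_def)
    moreover have "(\<lambda>z. (- (K * (l1^2 - l2^2))) * (sin (b (Im z)) * cos (b (Im z))) * (iz z * iz z)) \<in> Rgen GG"
      "(\<lambda>z. 0) \<in> Rgen GG" by (rule Rgen.mult Rgen.add | rule Rgen.const | (rule Rgen.gen, simp add: GG_def))+
    ultimately show ?thesis by blast
  qed
qed

lemma p1_R: "(\<lambda>z. p1f (Im z)) \<in> Rgen GG"
proof -
  have "(\<lambda>z. (m / l1 * (l1 * l2 * K)) * (iz z * sin (b (Im z)))) \<in> Rgen GG" by (rule Rgen.mult Rgen.add | rule Rgen.const | (rule Rgen.gen, simp add: GG_def))+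
  moreover have "(\<lambda>z. (m / l1 * (l1 * l2 * K)) * (iz z * sin (b (Im z)))) = (\<lambda>z. p1f (Im z))"
    by (simp add: fun_eq_iff p1f_def iz_def Pf_iz)
  ultimately show ?thesis by simp
qed

lemma p2_R: "(\<lambda>z. p2f (Im z)) \<in> Rgen GG"
proof -
  have "(\<lambda>z. (- m / l2 * (l1 * l2 * K)) * (iz z * cos (b (Im z)))) \<in> Rgen GG" by (rule Rgen.mult Rgen.add | rule Rgen.const | (rule Rgen.gen, simp add: GG_def))+
  moreover have "(\<lambda>z. (- m / l2 * (l1 * l2 * K)) * (iz z * cos (b (Im z)))) = (\<lambda>z. p2f (Im z))"
    by (simp add: fun_eq_iff p2f_def iz_def Pf_iz)
  ultimately show ?thesis by simp
qed

lemma Xr_comp_R: "(\<lambda>z. Xr z $ k) \<in> Rgen GG"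
proof -
  have s: "(\<lambda>z. Sz z * p1f (Im z)) \<in> Rgen GG" "(\<lambda>z. Sz z * p2f (Im z)) \<in> Rgen GG"
    by (intro Rgen.mult p1_R p2_R; (rule Rgen.mult Rgen.add | rule Rgen.const | (rule Rgen.gen, simp add: GG_def))+)+
  have c1: "(\<lambda>z. Xr z $ 1) \<in> Rgen GG"
  proof -
    have "(\<lambda>z. cos (x3 (Im z)) * (Sz z * p1f (Im z)) - sin (x3 (Im z)) * (Sz z * p2f (Im z))) \<in> Rgen GG"
      by (intro Rgen_diff Rgen.mult s; (rule Rgen.mult Rgen.add | rule Rgen.const | (rule Rgen.gen, simp add: GG_def))+)
    then show ?thesis by (simp add: Xr_def)
  qed
  have c2: "(\<lambda>z. Xr z $ 2) \<in> Rgen GG"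
  proof -
    have "(\<lambda>z. sin (x3 (Im z)) * (Sz z * p1f (Im z)) + cos (x3 (Im z)) * (Sz z * p2f (Im z))) \<in> Rgen GG"
      by (intro Rgen.add Rgen.mult s; (rule Rgen.mult Rgen.add | rule Rgen.const | (rule Rgen.gen, simp add: GG_def))+)
    then show ?thesis by (simp add: Xr_def)
  qed
  have c3: "(\<lambda>z. Xr z $ 3) \<in> Rgen GG"
  proof -
    have "(\<lambda>z. x3 (Im z)) \<in> Rgen GG" by (rule Rgen.mult Rgen.add | rule Rgen.const | (rule Rgen.gen, simp add: GG_def))+
    then show ?thesis by (simp add: Xr_def)
  qed
  show ?thesis using c1 c2 c3 exhaust_3[of k] by auto
qed

lemma smooth_Xr: "smooth_map Xr"
  unfolding smooth_map_def using Rgen_Ck_vec[OF closedGG Xr_comp_R] by blast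

end


context surf begin

lemma inj_D: "inj (\<lambda>w. Re w *\<^sub>R Xu z + Im w *\<^sub>R Xv z)"
proof (rule injI)
  fix x y :: complex
  assume h: "Re x *\<^sub>R Xu z + Im x *\<^sub>R Xv z = Re y *\<^sub>R Xu z + Im y *\<^sub>R Xv z"
  define a1 where "a1 = - l1 * Cz z * p1f (Im z)"
  define a2 where "a2 = - l1 * Cz z * p2f (Im z)"
  have D: "Re w *\<^sub>R Xu z + Im w *\<^sub>R Xv z = rot (x3 (Im z)) (Re w * a1 + Im w * (Sz z * q1f (Im z)))
      (Re w * a2 + Im w * (Sz z * q2f (Im z))) (Im w * Pf (Im z))" for w
    by (simp add: Xu_def Xv_def rot_scale rot_add a1_def a2_def)
  from h have e: "Re x * a1 + Im x * (Sz z * q1f (Im z)) = Re y * a1 + Im y * (Sz z * q1f (Im z))"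
      "Re x * a2 + Im x * (Sz z * q2f (Im z)) = Re y * a2 + Im y * (Sz z * q2f (Im z))"
      "Im x * Pf (Im z) = Im y * Pf (Im z)"
    unfolding D rot_eq_iff by auto
  have im: "Im x = Im y" using e(3) Pf_ne by simp
  with e have r: "Re x * a1 = Re y * a1" "Re x * a2 = Re y * a2" by auto
  have "a1 \<noteq> 0 \<or> a2 \<noteq> 0"
  proof (rule ccontr)
    assume "\<not> (a1 \<noteq> 0 \<or> a2 \<noteq> 0)"
    then have "sin (b (Im z)) = 0" "cos (b (Im z)) = 0"
      using Cz_pos[of z] Pf_ne[of "Im z"] l1ne l2ne
      by (auto simp: a1_def a2_def p1f_def p2f_def m_def)
    then show False using hs[of "b (Im z)"] by simp
  qed
  then have "Re x = Re y" using r by auto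
  with im show "x = y" by (simp add: complex_eq_iff)
qed

lemma immersion_Xr: "immersion Xr"
  unfolding immersion_def using smooth_Xr Xr_deriv inj_D by blast

definition Nr :: "complex \<Rightarrow> real^3" where
  "Nr z = rot (x3 (Im z)) (cos (b (Im z)) / (l1 * Cz z)) (sin (b (Im z)) / (l2 * Cz z))
             (- (l1 * l2) * Sz z / Cz z)"

lemma Cz_ne: "Cz z \<noteq> 0" using Cz_pos[of z] by simp

lemma cont_th: "continuous_on UNIV (\<lambda>z. x3 (Im z))" by (rule hasp_continuous_on[OF th_hasp])
lemma cont_b: "continuous_on UNIV (\<lambda>z. b (Im z))" by (rule hasp_continuous_on[OF hasp_Im_fun[OF bD']])
lemma cont_S: "continuous_on UNIV Sz" by (rule hasp_continuous_on[OF Sz_hasp])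
lemma cont_C: "continuous_on UNIV Cz" by (rule hasp_continuous_on[OF Cz_hasp])

lemma cont_Nr: "continuous_on UNIV Nr"
proof -
  have c: "continuous_on UNIV (\<lambda>z. cos (b (Im z)) / (l1 * Cz z))"
    "continuous_on UNIV (\<lambda>z. sin (b (Im z)) / (l2 * Cz z))"
    "continuous_on UNIV (\<lambda>z. - (l1 * l2) * Sz z / Cz z)"
    using l1ne l2ne
    by (auto intro!: continuous_intros cont_b cont_C cont_S simp: Cz_ne)
  show ?thesis
    unfolding Nr_def[abs_def] rot_as_sum
    by (intro continuous_intros cont_th c)
qed

lemma unit_Nr: "unit_normal l1 l2 Xr Nr"
  unfolding unit_normal_def
proof (intro conjI allI cont_Nr)
  fix z
  show "ginner l1 l2 (Xr z) (Nr z) (Nr z) = 1"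
    unfolding Nr_def ginner_rot'[OF Xr3]
    using CS[of z] hs[of "b (Im z)"] Cz_pos[of z] l1ne l2ne
    by (simp add: field_simps; algebra)
  show "ginner l1 l2 (Xr z) (Nr z) (pd Xr 1 z) = 0"
    unfolding Nr_def pdX1 Xu_def ginner_rot'[OF Xr3] p1f_def p2f_def
    using Cz_pos[of z] l1ne l2ne
    by (simp add: field_simps; simp add: algebra_simps power2_eq_square)
  show "ginner l1 l2 (Xr z) (Nr z) (pd Xr \<i> z) = 0"
    unfolding Nr_def pdXi Xv_def ginner_rot'[OF Xr3] q1f_def q2f_def m_def
    using Cz_pos[of z] l1ne l2ne hs[of "b (Im z)"]
    by (simp add: field_simps; algebra)
qed

lemma ncomp:
  "normal_comp l1 l2 Xr Nr 1 z = cos (b (Im z)) / Cz z"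
  "normal_comp l1 l2 Xr Nr 2 z = sin (b (Im z)) / Cz z"
  "normal_comp l1 l2 Xr Nr 3 z = - Sz z / Cz z"
  unfolding normal_comp_def frameE_rot Xr3 Nr_def ginner_rot'[OF Xr3]
  using Cz_pos[of z] l1ne l2ne by (simp_all add: field_simps power2_eq_square)

lemma CmS: "Cz z - Sz z = exp (l1 * Re z)"
  unfolding Cz_def Sz_def using cosh_minus_sinh[of "- l1 * Re z"] by simp

lemma gauss_Nr:
  "1 + normal_comp l1 l2 Xr Nr 3 z \<noteq> 0 \<and>
   gauss_map l1 l2 Xr Nr z = of_real (exp (- l1 * Re z)) * cis (b (Im z))"
proof -
  have C: "Cz z > 0" by (rule Cz_pos)
  have one: "1 + normal_comp l1 l2 Xr Nr 3 z = exp (l1 * Re z) / Cz z"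
    using C CmS[of z] by (simp add: ncomp field_simps)
  have cx: "Complex (cos (b (Im z)) / Cz z) (sin (b (Im z)) / Cz z) = of_real (1 / Cz z) * cis (b (Im z))"
    by (simp add: complex_eq_iff cis.sel)
  have "gauss_map l1 l2 Xr Nr z = of_real (1 / Cz z) * cis (b (Im z)) / of_real (exp (l1 * Re z) / Cz z)"
    unfolding gauss_map_def one by (simp add: ncomp cx)
  also have "\<dots> = of_real (exp (- l1 * Re z)) * cis (b (Im z))"
    using C by (simp add: field_simps exp_minus of_real_divide)
  finally show ?thesis using one C by simp
qed

end

theorem theorem4p1:
  fixes l1 l2 K :: real and b x3 :: "real \<Rightarrow> real"
  assumes lam: "(l1 > l2 \<and> l2 > 0) \<or> (l1 = 1 \<and> l2 = 1)"
    and K: "K \<noteq> 0" "\<bar>K\<bar> < 1"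
    and b: "\<forall>v. (b has_real_derivative bprime l1 l2 K b v) (at v)" "b 0 = 0"
    and x3: "\<forall>v. (x3 has_real_derivative x3prime l1 l2 K b v) (at v)" "x3 0 = 0"
  shows "conformal_minimal_immersion l1 l2 (surfX l1 l2 K b x3) \<and>
         (\<exists>N. unit_normal l1 l2 (surfX l1 l2 K b x3) N \<and>
              (\<forall>z. 1 + normal_comp l1 l2 (surfX l1 l2 K b x3) N 3 z \<noteq> 0 \<and>
                   gauss_map l1 l2 (surfX l1 l2 K b x3) N z =
                     of_real (exp (- l1 * Re z)) * cis (b (Im z))))"
proof -
  interpret S: surf l1 l2 K b x3
    using lam K(1) K(2) b(1) x3(1) by unfold_locales auto
  show ?thesis
    unfolding S.surfX_eq conformal_minimal_immersion_def
    using S.immersion_Xr S.conformal_Xr S.minimal_Xr S.unit_Nr S.gauss_Nr by blast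
qed

end
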